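(* There are absolute constants $B_0$ and $M$ such that the following holds. Let $k,k'$ be integers with $1\le k\le k'\le k+10$, $u_1=e^{ikx}e^{-k^2t}$, $u_2=e^{ik'y}e^{-(k')^2t}$. For every $c_1>0$ and $t_1\ge0$, with $c_2>0$ defined by $c_1e^{-k^2t_1}=c_2e^{-(k')^2t_1}$, there exist a $C^2$ complex function $u$ and a continuous $\mathbb{C}^2$-valued vector field $B$ with $|B|\le B_0$ on $\mathbb{T}^2\times[t_1,t_1+\frac7{2k}]$ such that $\dot u=\Delta u+B\cdot\nabla u$ there, and: for $t\in[t_1,t_1+\frac1{2k}]$, $u=c_1u_1$ and $B=0$; for $t\in[t_1+\frac3k,t_1+\frac7{2k}]$, $u=c_2u_2$ and $B=0$; and for $t\in[t_1,t_1+\frac7{2k}]$, $u=f(t)e^{ikx}+g(t)e^{ik'y}$ with $f,g\in C^2$ satisfying, for $0\le\alpha\le2$, $|f^{(\alpha)}(t)|\le Mc_1k^{2\alpha}e^{-k^2t}$ and $|g^{(\alpha)}(t)|\le Mc_2(k')^{2\alpha}e^{-(k')^2t}$.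
   Context: $\mathbb{T}^2=(\mathbb{R}/2\pi\mathbb{Z})^2$ with coordinates $(x,y)$; $t$ the third coordinate; $\dot u=\partial_tu$; $\Delta$ and $\nabla$ are in the spatial variables $(x,y)$, and $B\cdot\nabla u=B_1\partial_xu+B_2\partial_yu$. *)

theory Defs
  imports "HOL-Analysis.Analysis"
begin

type_synonym pt = "real \<times> real \<times> real"  (* (x, y, t) *)

definition C2_on_with :: "pt set \<Rightarrow> (pt \<Rightarrow> complex) \<Rightarrow> (pt \<Rightarrow> pt \<Rightarrow>\<^sub>L complex)
    \<Rightarrow> (pt \<Rightarrow> pt \<Rightarrow>\<^sub>L (pt \<Rightarrow>\<^sub>L complex)) \<Rightarrow> bool" where
  "C2_on_with S u Du D2u \<longleftrightarrow>
     (\<forall>p\<in>S. (u has_derivative blinfun_apply (Du p)) (at p within S)) \<and>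
     (\<forall>p\<in>S. (Du has_derivative blinfun_apply (D2u p)) (at p within S)) \<and>
     continuous_on S D2u"

definition C2_real_with :: "real set \<Rightarrow> (real \<Rightarrow> complex) \<Rightarrow> (real \<Rightarrow> complex)
    \<Rightarrow> (real \<Rightarrow> complex) \<Rightarrow> bool" where
  "C2_real_with I f f1 f2 \<longleftrightarrow>
     (\<forall>t\<in>I. (f has_vector_derivative f1 t) (at t within I)) \<and>
     (\<forall>t\<in>I. (f1 has_vector_derivative f2 t) (at t within I)) \<and>
     continuous_on I f2"

text \<open>2pi-periodicity in x and y (functions on the torus T^2 times time).\<close>
definition torus_periodic :: "(pt \<Rightarrow> 'a) \<Rightarrow> bool" where
  "torus_periodic u \<longleftrightarrow> (\<forall>x y t. u (x + 2*pi, y, t) = u (x, y, t) \<and> u (x, y + 2*pi, t) = u (x, y, t))"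

definition dir_x :: pt where "dir_x = (1, 0, 0)"
definition dir_y :: pt where "dir_y = (0, 1, 0)"
definition dir_t :: pt where "dir_t = (0, 0, 1)"

end

theory Submission
  imports Defs
begin


lemma maxpow_deriv:
  assumes "n \<ge> 1"
  shows "((\<lambda>x::real. (max 0 x)^(Suc n)) has_real_derivative (real (Suc n) * (max 0 x)^n)) (at x)"
proof (cases "x > 0")
  case True
  have "((\<lambda>x::real. x^(Suc n)) has_real_derivative (real (Suc n) * (max 0 x)^n)) (at x)"
    using DERIV_pow[of "Suc n" x] True by simp
  then show ?thesis
    apply (rule has_field_derivative_transform_within_open[where S="{0<..}"])
    using True by auto
next
  case False
  show ?thesis
  proof (cases "x < 0")
    case True
    have "((\<lambda>x::real. 0) has_real_derivative (real (Suc n) * (max 0 x)^n)) (at x)"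
      using True assms by (simp add: max_def zero_power)
    then show ?thesis
      apply (rule has_field_derivative_transform_within_open[where S="{..<0}"])
      using True assms by auto
  next
    case False
    with \<open>\<not> x > 0\<close> have x0: "x = 0" by auto
    have "((\<lambda>y. ((max 0 y)^(Suc n) - (max 0 x)^(Suc n)) / (y - x)) \<longlongrightarrow> 0) (at x)"
    proof (rule Lim_null_comparison)
      show "\<forall>\<^sub>F y in at x. norm (((max 0 y)^(Suc n) - (max 0 x)^(Suc n)) / (y - x)) \<le> \<bar>y\<bar>^n"
      proof (rule always_eventually, rule allI)
        fix y :: real
        show "norm (((max 0 y)^(Suc n) - (max 0 x)^(Suc n)) / (y - x)) \<le> \<bar>y\<bar>^n"
        proof (cases "y > 0")
          case True
          then show ?thesis using x0 by (simp add: abs_mult power_abs)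
        next
          case False
          then show ?thesis using x0 assms by (simp add: max_def)
        qed
      qed
      show "((\<lambda>y. \<bar>y\<bar>^n) \<longlongrightarrow> 0) (at x)"
        using x0 assms by (auto intro!: tendsto_eq_intros)
    qed
    then show ?thesis using x0 assms by (simp add: has_field_derivative_iff zero_power)
  qed
qed

definition P :: "real \<Rightarrow> real" where "P x = (max 0 x)^3"
definition P1 :: "real \<Rightarrow> real" where "P1 x = 3 * (max 0 x)^2"
definition P2 :: "real \<Rightarrow> real" where "P2 x = 6 * max 0 x"

lemma P_deriv: "(P has_real_derivative P1 x) (at x)"
  using maxpow_deriv[of 2 x] unfolding P_def P1_def by (simp add: numeral_3_eq_3)

lemma P1_deriv: "(P1 has_real_derivative P2 x) (at x)"
  using DERIV_cmult[OF maxpow_deriv[of 1 x], of 3] unfolding P1_def P2_def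
  by (simp add: numeral_2_eq_2)

lemma P_nonneg: "P x \<ge> 0" by (simp add: P_def)
lemma P_pos: "x > 0 \<Longrightarrow> P x > 0" by (simp add: P_def)
lemma P_zero: "x \<le> 0 \<Longrightarrow> P x = 0" "x \<le> 0 \<Longrightarrow> P1 x = 0" "x \<le> 0 \<Longrightarrow> P2 x = 0"
  by (auto simp: P_def P1_def P2_def max_def)

lemma D_pos: "P x + P (1 - x) > 0"
proof (cases "x > 0")
  case True then show ?thesis using P_pos[of x] P_nonneg[of "1-x"] by auto
next
  case False then show ?thesis using P_pos[of "1-x"] P_nonneg[of x] by auto
qed

definition sig :: "real \<Rightarrow> real" where "sig x = P x / (P x + P (1 - x))"
definition sig1 :: "real \<Rightarrow> real" where
  "sig1 x = (P1 x * (P x + P (1 - x)) - P x * (P1 x - P1 (1 - x))) / (P x + P (1 - x))^2"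
definition sig2 :: "real \<Rightarrow> real" where
  "sig2 x = ((P2 x * (P x + P (1 - x)) - P x * (P2 x + P2 (1 - x))) * (P x + P (1 - x))
     - 2 * (P1 x * (P x + P (1 - x)) - P x * (P1 x - P1 (1 - x))) * (P1 x - P1 (1 - x)))
     / (P x + P (1 - x))^3"

lemma sig_deriv: "(sig has_real_derivative sig1 x) (at x)"
proof -
  have D: "P x + P (1 - x) \<noteq> 0" using D_pos[of x] by auto
  show ?thesis unfolding sig_def[abs_def]
    apply (rule derivative_eq_intros P_deriv refl | rule DERIV_chain2[OF P_deriv])+
    using D by (auto simp: sig1_def field_simps power2_eq_square)
qed

definition Dn :: "real \<Rightarrow> real" where "Dn x = P x + P (1 - x)"
definition Dn1 :: "real \<Rightarrow> real" where "Dn1 x = P1 x - P1 (1 - x)"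
definition Dn2 :: "real \<Rightarrow> real" where "Dn2 x = P2 x + P2 (1 - x)"
definition Nm :: "real \<Rightarrow> real" where "Nm x = P1 x * Dn x - P x * Dn1 x"

lemma Dn_deriv: "(Dn has_real_derivative Dn1 x) (at x)"
  unfolding Dn_def[abs_def] Dn1_def
  by (rule derivative_eq_intros P_deriv refl | rule DERIV_chain2[OF P_deriv])+ simp

lemma Dn1_deriv: "(Dn1 has_real_derivative Dn2 x) (at x)"
  unfolding Dn1_def[abs_def] Dn2_def
  by (rule derivative_eq_intros P1_deriv refl | rule DERIV_chain2[OF P1_deriv])+ simp

lemma Nm_deriv: "(Nm has_real_derivative (P2 x * Dn x - P x * Dn2 x)) (at x)"
  unfolding Nm_def[abs_def]
  by (rule derivative_eq_intros P1_deriv P_deriv Dn_deriv Dn1_deriv refl)+ simp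

lemma alg1: "(d::real) \<noteq> 0 \<Longrightarrow> (n' * d^2 - n * (2 * d * d')) / (d^2 * d^2) = (n' * d - 2 * n * d') / d^3"
  by (simp add: field_simps power2_eq_square power3_eq_cube)

lemma sig1_alt: "sig1 x = Nm x / (Dn x)^2"
  by (simp add: sig1_def Nm_def Dn_def Dn1_def)

lemma sig2_alt: "sig2 x = ((P2 x * Dn x - P x * Dn2 x) * Dn x - 2 * Nm x * Dn1 x) / (Dn x)^3"
  by (simp add: sig2_def Nm_def Dn_def Dn1_def Dn2_def)

lemma sig1_deriv: "(sig1 has_real_derivative sig2 x) (at x)"
proof -
  have D: "Dn x \<noteq> 0" using D_pos[of x] by (auto simp: Dn_def)
  have "((\<lambda>x. Nm x / (Dn x)^2) has_real_derivative
     ((P2 x * Dn x - P x * Dn2 x) * (Dn x)^2 - Nm x * (of_nat 2 * (Dn1 x * (Dn x)^(2 - Suc 0)))) / ((Dn x)^2 * (Dn x)^2)) (at x)"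
    by (rule DERIV_divide[OF Nm_deriv DERIV_power[OF Dn_deriv]]) (use D in simp)
  then show ?thesis using alg1[OF D, of "P2 x * Dn x - P x * Dn2 x" "Nm x" "Dn1 x"]
    unfolding sig1_alt[abs_def] sig2_alt by (simp add: ac_simps)
qed

lemma P2_cont: "isCont P2 x" unfolding P2_def[abs_def] by (intro continuous_intros)

lemma sig2_cont: "isCont sig2 x"
proof -
  have D: "Dn x \<noteq> 0" using D_pos[of x] by (auto simp: Dn_def)
  have c1: "isCont P x" "isCont Dn x" "isCont Dn1 x" "isCont Nm x"
    using P_deriv Dn_deriv Dn1_deriv Nm_deriv DERIV_isCont by blast+
  have c2: "isCont Dn2 x" unfolding Dn2_def[abs_def]
    by (intro continuous_intros isCont_o2[OF _ P2_cont])
  have e: "sig2 = (\<lambda>x. ((P2 x * Dn x - P x * Dn2 x) * Dn x - 2 * Nm x * Dn1 x) / (Dn x)^3)"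
    using sig2_alt by blast
  show ?thesis unfolding e
    by (intro continuous_intros c1 c2 P2_cont) (use D in simp)
qed

lemma sig_range: "0 \<le> sig x" "sig x \<le> 1"
  using D_pos[of x] P_nonneg[of x] P_nonneg[of "1-x"] by (auto simp: sig_def)

lemma sig_low: "x \<le> 0 \<Longrightarrow> sig x = 0 \<and> sig1 x = 0 \<and> sig2 x = 0"
  by (simp add: sig_def sig1_def sig2_def P_zero)

lemma sig_high: "x \<ge> 1 \<Longrightarrow> sig x = 1 \<and> sig1 x = 0 \<and> sig2 x = 0"
  using D_pos[of x] P_zero[of "1-x"] by (simp add: sig_def sig1_def sig2_def)

lemma bound_on_R:
  assumes c: "\<And>x. isCont h x" and z: "\<And>x::real. x \<notin> {0..1} \<Longrightarrow> h x = 0"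
  shows "\<exists>D\<ge>0. \<forall>x. \<bar>h x\<bar> \<le> (D::real)"
proof -
  have "compact (h ` {0..1})"
    by (intro compact_continuous_image continuous_at_imp_continuous_on) (auto simp: c)
  then obtain D where D: "\<And>y. y \<in> h ` {0..1} \<Longrightarrow> norm y \<le> D"
    using compact_imp_bounded bounded_iff by metis
  show ?thesis
  proof (intro exI[of _ "max 0 D"] conjI allI)
    fix x show "\<bar>h x\<bar> \<le> max 0 D"
      using D[of "h x"] z[of x] by (cases "x \<in> {0..1}") auto
  qed auto
qed

lemma sig1_bound: "\<exists>D\<ge>0. \<forall>x. \<bar>sig1 x\<bar> \<le> D"
  apply (rule bound_on_R)
  using sig1_deriv DERIV_isCont apply blast
  using sig_low sig_high by (metis atLeastAtMost_iff linorder_le_cases)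

lemma sig2_bound: "\<exists>D\<ge>0. \<forall>x. \<bar>sig2 x\<bar> \<le> D"
  apply (rule bound_on_R)
  using sig2_cont apply blast
  using sig_low sig_high by (metis atLeastAtMost_iff linorder_le_cases)



definition L3 :: "'v::euclidean_space \<times> 'v \<times> 'v \<Rightarrow> (pt \<Rightarrow>\<^sub>L 'v)" where
  "L3 q = Blinfun (\<lambda>w. fst w *\<^sub>R fst q + fst (snd w) *\<^sub>R fst (snd q) + snd (snd w) *\<^sub>R snd (snd q))"

lemma L3_inner_bl:
  "bounded_linear (\<lambda>w::pt. fst w *\<^sub>R (a::'v::euclidean_space) + fst (snd w) *\<^sub>R b + snd (snd w) *\<^sub>R c)"
  unfolding linear_conv_bounded_linear[symmetric]
  by (rule linearI) (auto simp: algebra_simps)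

lemma L3_apply:
  "blinfun_apply (L3 q) w = fst w *\<^sub>R fst q + fst (snd w) *\<^sub>R fst (snd q) + snd (snd w) *\<^sub>R snd (snd q)"
  unfolding L3_def by (simp add: bounded_linear_Blinfun_apply[OF L3_inner_bl])

lemma L3_bl: "bounded_linear (L3 :: 'v::euclidean_space \<times> 'v \<times> 'v \<Rightarrow> _)"
  unfolding linear_conv_bounded_linear[symmetric]
  by (rule linearI) (auto intro!: blinfun_eqI simp: L3_apply algebra_simps blinfun.add_left blinfun.scaleR_left)

definition Lc :: "(complex \<times> complex \<times> complex) \<times> (complex \<times> complex \<times> complex) \<times> (complex \<times> complex \<times> complex)
   \<Rightarrow> (pt \<Rightarrow>\<^sub>L (pt \<Rightarrow>\<^sub>L complex))" where
  "Lc q = (Blinfun L3) o\<^sub>L (L3 q)"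

lemma Lc_bl: "bounded_linear Lc"
  unfolding Lc_def[abs_def]
  by (rule bounded_linear_compose[OF bounded_bilinear.bounded_linear_right[OF bounded_bilinear_blinfun_compose] L3_bl])

lemma Lc_apply: "blinfun_apply (Lc q) w = L3 (blinfun_apply (L3 q) w)"
  unfolding Lc_def by (simp add: bounded_linear_Blinfun_apply[OF L3_bl])

lemma comp_t:
  assumes "(a has_vector_derivative a') (at t)"
  shows "((\<lambda>p::pt. a (snd (snd p))) has_derivative (\<lambda>w. snd (snd w) *\<^sub>R a')) (at (x, y, t))"
proof -
  have "((\<lambda>p::pt. snd (snd p)) has_derivative (\<lambda>w. snd (snd w))) (at (x, y, t))"
    by (intro derivative_eq_intros) auto
  from has_derivative_compose[OF this, of a "\<lambda>h. h *\<^sub>R a'"] assms show ?thesis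
    by (simp add: has_vector_derivative_def)
qed

lemma comp_x:
  assumes "(a has_vector_derivative a') (at x)"
  shows "((\<lambda>p::pt. a (fst p)) has_derivative (\<lambda>w. fst w *\<^sub>R a')) (at (x, y, t))"
proof -
  have "((\<lambda>p::pt. fst p) has_derivative (\<lambda>w. fst w)) (at (x, y, t))"
    by (intro derivative_eq_intros) auto
  from has_derivative_compose[OF this, of a "\<lambda>h. h *\<^sub>R a'"] assms show ?thesis
    by (simp add: has_vector_derivative_def)
qed

lemma comp_y:
  assumes "(a has_vector_derivative a') (at y)"
  shows "((\<lambda>p::pt. a (fst (snd p))) has_derivative (\<lambda>w. fst (snd w) *\<^sub>R a')) (at (x, y, t))"
proof -
  have "((\<lambda>p::pt. fst (snd p)) has_derivative (\<lambda>w. fst (snd w))) (at (x, y, t))"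
    by (intro derivative_eq_intros) auto
  from has_derivative_compose[OF this, of a "\<lambda>h. h *\<^sub>R a'"] assms show ?thesis
    by (simp add: has_vector_derivative_def)
qed

lemma prodx:
  fixes a b :: "real \<Rightarrow> complex"
  assumes "(a has_vector_derivative a') (at t)" "(b has_vector_derivative b') (at x)"
  shows "((\<lambda>p::pt. a (snd (snd p)) * b (fst p)) has_derivative
     (\<lambda>w. fst w *\<^sub>R (a t * b') + snd (snd w) *\<^sub>R (a' * b x))) (at (x, y, t))"
  using has_derivative_mult[OF comp_t[OF assms(1), of x y] comp_x[OF assms(2), of y t]]
  by (rule has_derivative_eq_rhs) (auto simp: algebra_simps)

lemma prody:
  fixes a b :: "real \<Rightarrow> complex"
  assumes "(a has_vector_derivative a') (at t)" "(b has_vector_derivative b') (at y)"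
  shows "((\<lambda>p::pt. a (snd (snd p)) * b (fst (snd p))) has_derivative
     (\<lambda>w. fst (snd w) *\<^sub>R (a t * b') + snd (snd w) *\<^sub>R (a' * b y))) (at (x, y, t))"
  using has_derivative_mult[OF comp_t[OF assms(1), of x y] comp_y[OF assms(2), of x t]]
  by (rule has_derivative_eq_rhs) (auto simp: algebra_simps)

definition ek :: "real \<Rightarrow> real \<Rightarrow> complex" where "ek k x = exp (\<i> * of_real (k * x))"

lemma ek_deriv: "(ek k has_vector_derivative (\<i> * of_real k * ek k x)) (at x)"
proof -
  have "((\<lambda>z. exp (\<i> * of_real k * z)) has_field_derivative (\<i> * of_real k * exp (\<i> * of_real k * of_real x))) (at (of_real x))"
    by (auto intro!: derivative_eq_intros)
  from has_vector_derivative_real_field[OF this] show ?thesis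
    by (simp add: ek_def[abs_def] mult.assoc)
qed

lemma ek_cont: "isCont (ek k) x"
  unfolding ek_def[abs_def] by (intro continuous_intros)



lemma ic_t: "isCont a (snd (snd p)) \<Longrightarrow> isCont (\<lambda>p::pt. a (snd (snd p))) p"
  by (rule isCont_o2[where f="\<lambda>p. snd (snd p)"]) (intro continuous_intros)
lemma ic_x: "isCont a (fst p) \<Longrightarrow> isCont (\<lambda>p::pt. a (fst p)) p"
  by (rule isCont_o2[where f="\<lambda>p. fst p"]) (intro continuous_intros)
lemma ic_y: "isCont a (fst (snd p)) \<Longrightarrow> isCont (\<lambda>p::pt. a (fst (snd p))) p"
  by (rule isCont_o2[where f="\<lambda>p. fst (snd p)"]) (intro continuous_intros)

lemma gen_C2:
  fixes f f1 f2 g g1 g2 :: "real \<Rightarrow> complex" and k k' :: real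
  assumes df1: "\<And>t. (f has_vector_derivative f1 t) (at t)"
      and df2: "\<And>t. (f1 has_vector_derivative f2 t) (at t)"
      and dg1: "\<And>t. (g has_vector_derivative g1 t) (at t)"
      and dg2: "\<And>t. (g1 has_vector_derivative g2 t) (at t)"
      and cf: "\<And>t. isCont f2 t" and cg: "\<And>t. isCont g2 t"
  defines "u \<equiv> \<lambda>p::pt. f (snd (snd p)) * ek k (fst p) + g (snd (snd p)) * ek k' (fst (snd p))"
    and "U \<equiv> \<lambda>p::pt. (f (snd (snd p)) * (\<i> * of_real k * ek k (fst p)),
                    g (snd (snd p)) * (\<i> * of_real k' * ek k' (fst (snd p))),
                    f1 (snd (snd p)) * ek k (fst p) + g1 (snd (snd p)) * ek k' (fst (snd p)))"
    and "X \<equiv> \<lambda>p::pt. (f (snd (snd p)) * (\<i> * of_real k * (\<i> * of_real k * ek k (fst p))), 0,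
                    f1 (snd (snd p)) * (\<i> * of_real k * ek k (fst p)))"
    and "Y \<equiv> \<lambda>p::pt. (0, g (snd (snd p)) * (\<i> * of_real k' * (\<i> * of_real k' * ek k' (fst (snd p)))),
                    g1 (snd (snd p)) * (\<i> * of_real k' * ek k' (fst (snd p))))"
    and "Z \<equiv> \<lambda>p::pt. (f1 (snd (snd p)) * (\<i> * of_real k * ek k (fst p)),
                    g1 (snd (snd p)) * (\<i> * of_real k' * ek k' (fst (snd p))),
                    f2 (snd (snd p)) * ek k (fst p) + g2 (snd (snd p)) * ek k' (fst (snd p)))"
  shows "C2_on_with S u (\<lambda>p. L3 (U p)) (\<lambda>p. Lc (X p, Y p, Z p))"
proof -
  have ekd2: "((\<lambda>x. \<i> * of_real kk * ek kk x) has_vector_derivative (\<i> * of_real kk * (\<i> * of_real kk * ek kk x))) (at x)" for kk x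
    by (intro has_vector_derivative_mult_right ek_deriv)
  have cf0: "isCont f t" "isCont f1 t" "isCont g t" "isCont g1 t" for t
    using df1 df2 dg1 dg2 has_vector_derivative_continuous by blast+
  have D1: "(u has_derivative blinfun_apply (L3 (U p))) (at p)" for p
  proof -
    obtain x y t where p: "p = (x, y, t)" by (cases p) auto
    show ?thesis unfolding p u_def
      using has_derivative_add[OF prodx[where t=t and x=x and y=y, OF df1 ek_deriv[of k x]] prody[where t=t and x=x and y=y, OF dg1 ek_deriv[of k' y]]]
      by (rule has_derivative_eq_rhs) (auto simp: L3_apply U_def algebra_simps)
  qed
  have D2: "((\<lambda>p. L3 (U p)) has_derivative blinfun_apply (Lc (X p, Y p, Z p))) (at p)" for p
  proof -
    obtain x y t where p: "p = (x, y, t)" by (cases p) auto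
    have "(U has_derivative blinfun_apply (L3 (X p, Y p, Z p))) (at p)"
      unfolding p U_def
      using has_derivative_Pair[OF prodx[where t=t and x=x and y=y, OF df1 ekd2[of k x]]
              has_derivative_Pair[OF prody[where t=t and x=x and y=y, OF dg1 ekd2[of k' y]]
                 has_derivative_add[OF prodx[where t=t and x=x and y=y, OF df2 ek_deriv[of k x]] prody[where t=t and x=x and y=y, OF dg2 ek_deriv[of k' y]]]]]
      by (rule has_derivative_eq_rhs) (auto simp: L3_apply X_def Y_def Z_def p algebra_simps)
    from bounded_linear.has_derivative[OF L3_bl this] show ?thesis
      by (simp add: Lc_apply[abs_def])
  qed
  have C: "continuous_on S (\<lambda>p. Lc (X p, Y p, Z p))"
  proof (rule bounded_linear.continuous_on[OF Lc_bl], rule continuous_at_imp_continuous_on, rule ballI)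
    fix p :: pt
    show "isCont (\<lambda>p. (X p, Y p, Z p)) p"
      unfolding X_def Y_def Z_def
      by (intro continuous_intros ic_t ic_x ic_y cf0 cf cg ek_cont)
  qed
  show ?thesis unfolding C2_on_with_def
    using D1 D2 C by (auto intro: has_derivative_at_withinI)
qed



lemma abs_mult_le: "\<bar>x\<bar> \<le> a \<Longrightarrow> \<bar>y\<bar> \<le> b \<Longrightarrow> \<bar>x * y\<bar> \<le> a * (b::real)"
  by (simp add: abs_mult mult_mono')

lemma tri4: "\<bar>-2 * ((A::real) + B) + 4 * C + D\<bar> \<le> 2 * \<bar>A\<bar> + 2 * \<bar>B\<bar> + 4 * \<bar>C\<bar> + \<bar>D\<bar>"
  by (smt (verit) abs_le_iff abs_ge_self abs_ge_minus_self)

lemma tri4': "\<bar>2 * (A::real) - 2 * B - 4 * C + D\<bar> \<le> 2 * \<bar>A\<bar> + 2 * \<bar>B\<bar> + 4 * \<bar>C\<bar> + \<bar>D\<bar>"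
  by (smt (verit) abs_le_iff abs_ge_self abs_ge_minus_self)

lemma tri2a: "\<bar>-2 * (x::real) - c\<bar> \<le> 2 * \<bar>x\<bar> + \<bar>c\<bar>"
  by (smt (verit) abs_le_iff abs_ge_self abs_ge_minus_self)

lemma tri2b: "\<bar>2 * (x::real) - c\<bar> \<le> 2 * \<bar>x\<bar> + \<bar>c\<bar>"
  by (smt (verit) abs_le_iff abs_ge_self abs_ge_minus_self)

lemma tri2: "\<bar>(A::real) - B\<bar> \<le> \<bar>A\<bar> + \<bar>B\<bar>"
  by arith

lemma s2_le: "0 \<le> (s::real) \<Longrightarrow> s \<le> 1 \<Longrightarrow> \<bar>1 - s^2\<bar> \<le> 1 \<and> \<bar>2 * s - s^2\<bar> \<le> 1 \<and> \<bar>s\<bar> \<le> 1 \<and> \<bar>1 - s\<bar> \<le> 1"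
proof -
  assume a: "0 \<le> s" "s \<le> 1"
  have "s^2 \<le> s" using mult_left_mono[of s 1 s] a by (simp add: power2_eq_square)
  moreover have "0 \<le> s^2" by simp
  moreover have "(1-s)^2 \<le> 1" using a by (simp add: power_le_one)
  moreover have "2 * s - s^2 = 1 - (1-s)^2" by (simp add: power2_eq_square algebra_simps)
  moreover have "0 \<le> (1-s)^2" by simp
  ultimately show ?thesis using a by (simp add: abs_le_iff)
qed

lemma powK: "1 \<le> (K::real) \<Longrightarrow> K \<le> K' \<Longrightarrow> K \<le> K'^2 \<and> K^2 \<le> K'^4 \<and> K * K'^2 \<le> K'^4 \<and> K'^2 \<le> K'^4 \<and> 1 \<le> K'"
proof -
  assume a: "1 \<le> K" "K \<le> K'"
  have k1: "1 \<le> K'" using a by simp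
  have "K' \<le> K'^2" using k1 by (simp add: power2_eq_square mult_le_cancel_left1)
  have "K'^2 \<le> K'^4" using k1 by (intro power_increasing) simp_all
  have "K^2 \<le> K'^2" using a by (simp add: power_mono)
  have "K * K'^2 \<le> K'^2 * K'^2" using mult_right_mono[of K "K'^2" "K'^2"] a \<open>K' \<le> K'^2\<close> by linarith
  moreover have "K'^2 * K'^2 = K'^4" by (simp add: power_add[symmetric])
  ultimately have f1: "K * K'^2 \<le> K'^4" by simp
  have f2: "K^2 \<le> K'^4" using \<open>K^2 \<le> K'^2\<close> \<open>K'^2 \<le> K'^4\<close> by linarith
  have f3: "K \<le> K'^2" using \<open>K' \<le> K'^2\<close> a by linarith
  show ?thesis using f1 f2 f3 \<open>K'^2 \<le> K'^4\<close> k1 by blast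
qed

lemma sq_le: "\<bar>s1\<bar> \<le> K * D1 \<Longrightarrow> \<bar>(s1::real)^2\<bar> \<le> K^2 * D1^2"
  by (metis abs_ge_zero abs_power2 power2_abs power_mono power_mult_distrib)

lemma bfg1:
  fixes s s1 K K' D1 :: real
  assumes "0 \<le> s" "s \<le> 1" "\<bar>s1\<bar> \<le> K * D1" "1 \<le> K" "K \<le> K'" "0 \<le> D1"
  shows "\<bar>-2 * s * s1 - K^2 * (1 - s^2)\<bar> \<le> K^2 * (2 * D1 + 1)"
    and "\<bar>2 * (1 - s) * s1 - K'^2 * (2 * s - s^2)\<bar> \<le> K'^2 * (2 * D1 + 1)"
proof -
  have S: "\<bar>1 - s^2\<bar> \<le> 1" "\<bar>2 * s - s^2\<bar> \<le> 1" "\<bar>s\<bar> \<le> 1" "\<bar>1 - s\<bar> \<le> 1"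
    using s2_le[OF assms(1,2)] by auto
  have P: "K \<le> K'^2" "1 \<le> K'" using powK[OF assms(4,5)] by auto
  have KK: "K \<le> K^2" using assms(4) by (simp add: power2_eq_square)
  have a: "\<bar>s * s1\<bar> \<le> 1 * (K * D1)" "\<bar>(1 - s) * s1\<bar> \<le> 1 * (K * D1)"
    using abs_mult_le[OF S(3) assms(3)] abs_mult_le[OF S(4) assms(3)] by auto
  have b: "\<bar>K^2 * (1 - s^2)\<bar> \<le> K^2 * 1" "\<bar>K'^2 * (2 * s - s^2)\<bar> \<le> K'^2 * 1"
    using abs_mult_le[OF _ S(1), of "K^2" "K^2"] abs_mult_le[OF _ S(2), of "K'^2" "K'^2"] by auto
  have c: "K * D1 \<le> K^2 * D1" "K * D1 \<le> K'^2 * D1" using KK P assms by (simp_all add: mult_right_mono)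
  have "\<bar>-2 * s * s1 - K^2 * (1 - s^2)\<bar> \<le> 2 * \<bar>s * s1\<bar> + \<bar>K^2 * (1 - s^2)\<bar>"
    using tri2a[of "s * s1" "K^2 * (1 - s^2)"] by (simp only: mult.assoc)
  then show "\<bar>-2 * s * s1 - K^2 * (1 - s^2)\<bar> \<le> K^2 * (2 * D1 + 1)"
    using a b c by (simp add: algebra_simps)
  have "\<bar>2 * (1 - s) * s1 - K'^2 * (2 * s - s^2)\<bar> \<le> 2 * \<bar>(1 - s) * s1\<bar> + \<bar>K'^2 * (2 * s - s^2)\<bar>"
    using tri2b[of "(1 - s) * s1" "K'^2 * (2 * s - s^2)"] by (simp only: mult.assoc)
  then show "\<bar>2 * (1 - s) * s1 - K'^2 * (2 * s - s^2)\<bar> \<le> K'^2 * (2 * D1 + 1)"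
    using a b c by (simp add: algebra_simps)
qed

lemma lin4: "X \<le> 2*a + 2*b + 4*c + d \<Longrightarrow> a \<le> A \<Longrightarrow> b \<le> B \<Longrightarrow> c \<le> C \<Longrightarrow> d \<le> D \<Longrightarrow> (X::real) \<le> 2*A + 2*B + 4*C + D"
  by linarith

lemma bfg2:
  fixes s s1 s2 K K' D1 D2 :: real
  assumes "0 \<le> s" "s \<le> 1" "\<bar>s1\<bar> \<le> K * D1" "\<bar>s2\<bar> \<le> K^2 * D2" "1 \<le> K" "K \<le> K'" "0 \<le> D1" "0 \<le> D2"
  shows "\<bar>-2 * (s1^2 + s * s2) + 4 * K^2 * s * s1 + K^4 * (1 - s^2)\<bar> \<le> K^4 * (2 * D1^2 + 2 * D2 + 4 * D1 + 1)"
    and "\<bar>2 * (1 - s) * s2 - 2 * s1^2 - 4 * K'^2 * (1 - s) * s1 + K'^4 * (2 * s - s^2)\<bar> \<le> K'^4 * (2 * D1^2 + 2 * D2 + 4 * D1 + 1)"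
proof -
  have S: "\<bar>1 - s^2\<bar> \<le> 1" "\<bar>2 * s - s^2\<bar> \<le> 1" "\<bar>s\<bar> \<le> 1" "\<bar>1 - s\<bar> \<le> 1"
    using s2_le[OF assms(1,2)] by auto
  have P: "K^2 \<le> K'^4" "K * K'^2 \<le> K'^4" using powK[OF assms(5,6)] by auto
  have P0: "K^2 \<le> K^4" "K * K^2 \<le> K^4" using powK[OF assms(5) order_refl] by auto
  have A: "\<bar>s1^2\<bar> \<le> K^2 * D1^2" by (rule sq_le[OF assms(3)])
  have B: "\<bar>s * s2\<bar> \<le> K^2 * D2" "\<bar>(1 - s) * s2\<bar> \<le> K^2 * D2"
    using abs_mult_le[OF S(3) assms(4)] abs_mult_le[OF S(4) assms(4)] by auto
  have C0: "\<bar>s * s1\<bar> \<le> K * D1" "\<bar>(1 - s) * s1\<bar> \<le> K * D1"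
    using abs_mult_le[OF S(3) assms(3)] abs_mult_le[OF S(4) assms(3)] by auto
  have C: "\<bar>K^2 * s * s1\<bar> \<le> K * K^2 * D1" "\<bar>K'^2 * (1 - s) * s1\<bar> \<le> K * K'^2 * D1"
  proof -
    have "\<bar>K^2 * s * s1\<bar> = K^2 * \<bar>s * s1\<bar>" by (simp add: abs_mult mult.assoc)
    also have "\<dots> \<le> K^2 * (K * D1)" using C0(1) by (simp add: mult_left_mono)
    finally show "\<bar>K^2 * s * s1\<bar> \<le> K * K^2 * D1" by (simp add: ac_simps)
    have "\<bar>K'^2 * (1 - s) * s1\<bar> = K'^2 * \<bar>(1 - s) * s1\<bar>" by (simp add: abs_mult mult.assoc)
    also have "\<dots> \<le> K'^2 * (K * D1)" using C0(2) by (simp add: mult_left_mono)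
    finally show "\<bar>K'^2 * (1 - s) * s1\<bar> \<le> K * K'^2 * D1" by (simp add: ac_simps)
  qed
  have D: "\<bar>K^4 * (1 - s^2)\<bar> \<le> K^4" "\<bar>K'^4 * (2 * s - s^2)\<bar> \<le> K'^4"
    using abs_mult_le[OF _ S(1), of "K^4" "K^4"] abs_mult_le[OF _ S(2), of "K'^4" "K'^4"] by auto
  have m1: "K^2 * D1^2 \<le> K^4 * D1^2" "K^2 * D2 \<le> K^4 * D2" "K * K^2 * D1 \<le> K^4 * D1"
    using P0 assms by (simp_all add: mult_right_mono)
  have m2: "K^2 * D1^2 \<le> K'^4 * D1^2" "K^2 * D2 \<le> K'^4 * D2" "K * K'^2 * D1 \<le> K'^4 * D1"
    using P assms by (simp_all add: mult_right_mono)
  have E: "K^4 * (2 * D1^2 + 2 * D2 + 4 * D1 + 1) = 2 * (K^4 * D1^2) + 2 * (K^4 * D2) + 4 * (K^4 * D1) + K^4"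
          "K'^4 * (2 * D1^2 + 2 * D2 + 4 * D1 + 1) = 2 * (K'^4 * D2) + 2 * (K'^4 * D1^2) + 4 * (K'^4 * D1) + K'^4"
    by (simp_all add: algebra_simps)
  have L: "-2 * (s1^2 + s * s2) + 4 * K^2 * s * s1 + K^4 * (1 - s^2) = -2 * (s1^2 + s * s2) + 4 * (K^2 * s * s1) + K^4 * (1 - s^2)"
          "2 * (1 - s) * s2 - 2 * s1^2 - 4 * K'^2 * (1 - s) * s1 + K'^4 * (2 * s - s^2) = 2 * ((1 - s) * s2) - 2 * s1^2 - 4 * (K'^2 * (1 - s) * s1) + K'^4 * (2 * s - s^2)"
    by (simp_all only: mult.assoc)
  have "\<bar>-2 * (s1^2 + s * s2) + 4 * (K^2 * s * s1) + K^4 * (1 - s^2)\<bar> \<le> 2 * \<bar>s1^2\<bar> + 2 * \<bar>s * s2\<bar> + 4 * \<bar>K^2 * s * s1\<bar> + \<bar>K^4 * (1 - s^2)\<bar>"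
    by (rule tri4)
  then show "\<bar>-2 * (s1^2 + s * s2) + 4 * K^2 * s * s1 + K^4 * (1 - s^2)\<bar> \<le> K^4 * (2 * D1^2 + 2 * D2 + 4 * D1 + 1)"
    unfolding L E by (rule lin4[OF _ order_trans[OF A m1(1)] order_trans[OF B(1) m1(2)] order_trans[OF C(1) m1(3)] D(1)])
  have "\<bar>2 * ((1 - s) * s2) - 2 * s1^2 - 4 * (K'^2 * (1 - s) * s1) + K'^4 * (2 * s - s^2)\<bar> \<le> 2 * \<bar>(1 - s) * s2\<bar> + 2 * \<bar>s1^2\<bar> + 4 * \<bar>K'^2 * (1 - s) * s1\<bar> + \<bar>K'^4 * (2 * s - s^2)\<bar>"
    by (rule tri4')
  then show "\<bar>2 * (1 - s) * s2 - 2 * s1^2 - 4 * K'^2 * (1 - s) * s1 + K'^4 * (2 * s - s^2)\<bar> \<le> K'^4 * (2 * D1^2 + 2 * D2 + 4 * D1 + 1)"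
    unfolding L E by (rule lin4[OF _ order_trans[OF B(2) m2(2)] order_trans[OF A m2(1)] order_trans[OF C(2) m2(3)] D(2)])
qed



lemma algF: "(e2::real) \<noteq> 0 \<Longrightarrow> kp \<noteq> 0 \<Longrightarrow> 2 - s \<noteq> 0 \<Longrightarrow>
  e1 * (-2 * s * s1 - k^2 * (1 - s^2)) = -(k^2) * (e1 * (1 - s^2)) - (2 * s1 * e1 / (kp * e2 * (2 - s))) * kp * (e2 * (2 * s - s^2))"
  by (simp add: field_simps power2_eq_square)

lemma algG: "(e1::real) \<noteq> 0 \<Longrightarrow> k \<noteq> 0 \<Longrightarrow> 1 + s \<noteq> 0 \<Longrightarrow>
  e2 * (2 * (1 - s) * s1 - kp^2 * (2 * s - s^2)) = -(kp^2) * (e2 * (2 * s - s^2)) - (-2 * s1 * e2 / (k * e1 * (1 + s))) * k * (e1 * (1 - s^2))"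
proof -
  assume a: "e1 \<noteq> 0" "k \<noteq> 0" "1 + s \<noteq> 0"
  define d where "d = k * e1 * (1 + s)"
  have d0: "d \<noteq> 0" using a by (simp add: d_def)
  have e: "k * (e1 * (1 - s^2)) = d * (1 - s)" by (simp add: d_def algebra_simps power2_eq_square)
  have "(-2 * s1 * e2 / (k * e1 * (1 + s))) * k * (e1 * (1 - s^2)) = (-2 * s1 * e2 / d) * (k * (e1 * (1 - s^2)))"
    by (simp only: d_def mult.assoc)
  also have "\<dots> = (-2 * s1 * e2 / d) * (d * (1 - s))" by (simp only: e)
  also have "\<dots> = -2 * s1 * e2 * (1 - s)" using d0 by simp
  finally have c: "(-2 * s1 * e2 / (k * e1 * (1 + s))) * k * (e1 * (1 - s^2)) = -2 * s1 * e2 * (1 - s)" .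
  show ?thesis unfolding c by (simp add: algebra_simps power2_eq_square)
qed

lemma lift1: "(F1::real) = -(k^2) * F - H * k' * G \<Longrightarrow>
   complex_of_real F1 = - (complex_of_real k ^ 2) * complex_of_real F + (\<i> * of_real H) * (\<i> * of_real k') * of_real G"
proof -
  assume a: "F1 = -(k^2) * F - H * k' * G"
  have "complex_of_real F1 = of_real (-(k^2) * F - H * k' * G)" using a by simp
  also have "\<dots> = - (complex_of_real k ^ 2) * complex_of_real F - of_real H * of_real k' * of_real G" by simp
  also have "(\<i> * of_real H) * (\<i> * of_real k') * of_real G = - (of_real H * of_real k' * complex_of_real G)"
    by (simp add: algebra_simps)
  ultimately show ?thesis by simp
qed

lemma pde_alg:
  fixes f f1 g g1 a h m1 m2 e1 e2 k k' :: complex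
  assumes "f1 = -(k^2)*f + h*(\<i>*k')*g" "g1 = -(k'^2)*g + a*(\<i>*k)*f" "m1*e1 = e2" "m2*e2 = e1"
  shows "f1*e1 + g1*e2 = f*(\<i>*k*(\<i>*k*e1)) + g*(\<i>*k'*(\<i>*k'*e2)) + a*m1*(f*(\<i>*k*e1)) + h*m2*(g*(\<i>*k'*e2))"
proof -
  have "a*m1*(f*(\<i>*k*e1)) = a*(\<i>*k)*f*(m1*e1)" "h*m2*(g*(\<i>*k'*e2)) = h*(\<i>*k')*g*(m2*e2)"
    by (simp_all add: algebra_simps)
  note h = this
  show ?thesis unfolding h assms(3,4) unfolding assms(1,2) by (simp add: algebra_simps power2_eq_square)
qed

lemma ekmix: "exp (\<i> * complex_of_real (b - a)) * exp (\<i> * complex_of_real a) = exp (\<i> * complex_of_real b)"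
  by (simp add: exp_add[symmetric] algebra_simps)

lemma exp_per: "exp (\<i> * complex_of_real (r + real_of_int n * (2 * pi))) = exp (\<i> * complex_of_real r)"
proof -
  have "\<i> * complex_of_real (r + real_of_int n * (2 * pi)) = \<i> * complex_of_real r + \<i> * (of_int n * (of_real pi * 2))"
    by (simp add: algebra_simps)
  then have "exp (\<i> * complex_of_real (r + real_of_int n * (2 * pi))) = exp (\<i> * complex_of_real r + \<i> * (of_int n * (of_real pi * 2)))"
    by (simp only:)
  also have "\<dots> = exp (\<i> * complex_of_real r)" by (rule exp_plus_2pin)
  finally show ?thesis .
qed



lemma L3_dirs: "blinfun_apply (L3 q) dir_x = fst q" "blinfun_apply (L3 q) dir_y = fst (snd q)"
  "blinfun_apply (L3 q) dir_t = snd (snd q)"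
  by (simp_all add: L3_apply dir_x_def dir_y_def dir_t_def)

lemma Lc_dirs: "blinfun_apply (blinfun_apply (Lc q) dir_x) dir_x = fst (fst q)"
  "blinfun_apply (blinfun_apply (Lc q) dir_y) dir_y = fst (snd (fst (snd q)))"
  by (simp_all add: Lc_apply L3_dirs)

lemma fracb:
  fixes x K D d :: real
  assumes "\<bar>x\<bar> \<le> K * D" "0 < K" "1 \<le> d" "K \<le> K'"
  shows "\<bar>c * x / (K' * d)\<bar> \<le> \<bar>c\<bar> * D"
proof -
  have K': "0 < K'" using assms by simp
  have "\<bar>x\<bar> \<le> K' * D * d"
  proof -
    have "0 \<le> D" using assms(1,2) by (smt (verit) abs_ge_zero zero_le_mult_iff)
    then have "K * D \<le> K' * D" using assms by (simp add: mult_right_mono)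
    also have "\<dots> \<le> K' * D * d" using mult_left_mono[of 1 d "K' * D"] assms \<open>0 \<le> D\<close> K' by simp
    finally show ?thesis using assms(1) by simp
  qed
  then have "\<bar>c\<bar> * \<bar>x\<bar> \<le> \<bar>c\<bar> * (K' * D * d)" by (simp add: mult_left_mono)
  then show ?thesis using K' assms(3) by (simp add: abs_mult divide_le_eq abs_divide ac_simps)
qed

lemma ek_per: "ek (real_of_int k) (x + 2 * pi) = ek (real_of_int k) x"
  unfolding ek_def using exp_per[of "real_of_int k * x" k] by (simp add: algebra_simps)

lemma mix_per:
  "exp (\<i> * complex_of_real (real_of_int a * y - real_of_int b * (x + 2 * pi))) = exp (\<i> * complex_of_real (real_of_int a * y - real_of_int b * x))"
  using exp_per[of "real_of_int a * y - real_of_int b * x" "- b"] by (simp add: algebra_simps)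

lemma mix_per2:
  "exp (\<i> * complex_of_real (real_of_int a * (y + 2 * pi) - real_of_int b * x)) = exp (\<i> * complex_of_real (real_of_int a * y - real_of_int b * x))"
  using exp_per[of "real_of_int a * y - real_of_int b * x" "a"] by (simp add: algebra_simps)



lemma fin_bound:
  fixes E q K c M c0 ex :: real
  assumes "0 < E" "\<bar>q\<bar> \<le> K * c" "c \<le> M" "0 \<le> K" "E = c0 * ex"
  shows "norm (complex_of_real (E * q)) \<le> M * c0 * K * ex"
proof -
  have "norm (complex_of_real (E * q)) = E * \<bar>q\<bar>" using assms(1) by (simp add: norm_mult)
  also have "\<dots> \<le> E * (K * c)" using assms by (simp add: mult_left_mono)
  also have "\<dots> \<le> E * (K * M)" using assms by (intro mult_left_mono) auto
  finally show ?thesis using assms(5) by (simp add: ac_simps)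
qed

lemma fin_bound0:
  fixes E q M c0 ex :: real
  assumes "0 < E" "\<bar>q\<bar> \<le> 1" "1 \<le> M" "E = c0 * ex"
  shows "norm (complex_of_real (E * q)) \<le> M * c0 * ex"
  using fin_bound[OF assms(1), of q 1 1 M c0 ex] assms by simp

lemma construction:
  fixes k k' :: int and c1 c2 t1 D1 D2 B0 M :: real
  assumes hk: "1 \<le> k" "k \<le> k'" "k' \<le> k + 10" and hc1: "c1 > 0" and ht1: "t1 \<ge> 0" and hc2: "c2 > 0"
    and hc: "c1 * exp (- (real_of_int k)\<^sup>2 * t1) = c2 * exp (- (real_of_int k')\<^sup>2 * t1)"
    and hD1: "\<forall>x. \<bar>sig1 x\<bar> \<le> D1" and hD2: "\<forall>x. \<bar>sig2 x\<bar> \<le> D2" and D1p: "D1 \<ge> 0" and D2p: "D2 \<ge> 0"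
    and hB0: "B0 = 2 * D1 + 2 * D1 * exp 420" and hM: "M = 1 + 4 * D1 + 2 * D1^2 + 2 * D2"
  shows "(\<exists>(u :: pt \<Rightarrow> complex) Du D2u (B :: pt \<Rightarrow> complex \<times> complex)
        (f :: real \<Rightarrow> complex) f1 f2 (g :: real \<Rightarrow> complex) g1 g2.
      let I = {t1 .. t1 + 7 / (2 * real_of_int k)};
          S = (UNIV :: real set) \<times> (UNIV :: real set) \<times> I;
          u1 = (\<lambda>(x::real, y::real, t::real). exp (\<i> * of_real (real_of_int k * x)) * of_real (exp (- (real_of_int k)\<^sup>2 * t)));
          u2 = (\<lambda>(x::real, y::real, t::real). exp (\<i> * of_real (real_of_int k' * y)) * of_real (exp (- (real_of_int k')\<^sup>2 * t)))
      in torus_periodic u \<and> torus_periodic B \<and>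
         C2_on_with S u Du D2u \<and>
         continuous_on S B \<and>
         (\<forall>p\<in>S. norm (B p) \<le> B0) \<and>
         (\<forall>p\<in>S. Du p dir_t = D2u p dir_x dir_x + D2u p dir_y dir_y
                               + fst (B p) * Du p dir_x + snd (B p) * Du p dir_y) \<and>
         (\<forall>x y t. t \<in> {t1 .. t1 + 1 / (2 * real_of_int k)} \<longrightarrow>
              u (x, y, t) = of_real c1 * u1 (x, y, t) \<and> B (x, y, t) = 0) \<and>
         (\<forall>x y t. t \<in> {t1 + 3 / real_of_int k .. t1 + 7 / (2 * real_of_int k)} \<longrightarrow>
              u (x, y, t) = of_real c2 * u2 (x, y, t) \<and> B (x, y, t) = 0) \<and>
         C2_real_with I f f1 f2 \<and> C2_real_with I g g1 g2 \<and>
         (\<forall>x y t. t \<in> I \<longrightarrow>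
              u (x, y, t) = f t * exp (\<i> * of_real (real_of_int k * x))
                          + g t * exp (\<i> * of_real (real_of_int k' * y))) \<and>
         (\<forall>t\<in>I.
              norm (f t) \<le> M * c1 * exp (- (real_of_int k)\<^sup>2 * t) \<and>
              norm (f1 t) \<le> M * c1 * (real_of_int k)^2 * exp (- (real_of_int k)\<^sup>2 * t) \<and>
              norm (f2 t) \<le> M * c1 * (real_of_int k)^4 * exp (- (real_of_int k)\<^sup>2 * t) \<and>
              norm (g t) \<le> M * c2 * exp (- (real_of_int k')\<^sup>2 * t) \<and>
              norm (g1 t) \<le> M * c2 * (real_of_int k')^2 * exp (- (real_of_int k')\<^sup>2 * t) \<and>
              norm (g2 t) \<le> M * c2 * (real_of_int k')^4 * exp (- (real_of_int k')\<^sup>2 * t)))"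
proof -
  define kk where "kk = real_of_int k"
  define kk' where "kk' = real_of_int k'"
  have kk: "1 \<le> kk" "kk \<le> kk'" "kk' \<le> kk + 10" "0 < kk" "0 < kk'" using hk by (simp_all add: kk_def kk'_def)
  have hc': "c1 * exp (- kk\<^sup>2 * t1) = c2 * exp (- kk'\<^sup>2 * t1)" using hc by (simp add: kk_def kk'_def)
  define tau where "tau = (\<lambda>t. kk * (t - t1) - 1)"
  define s where "s = (\<lambda>t. sig (tau t))"
  define s1 where "s1 = (\<lambda>t. kk * sig1 (tau t))"
  define s2 where "s2 = (\<lambda>t. kk^2 * sig2 (tau t))"
  define E1 where "E1 = (\<lambda>t. c1 * exp (- kk\<^sup>2 * t))"
  define E2 where "E2 = (\<lambda>t. c2 * exp (- kk'\<^sup>2 * t))"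
  define F where "F = (\<lambda>t. E1 t * (1 - (s t)^2))"
  define F1 where "F1 = (\<lambda>t. E1 t * (-2 * s t * s1 t - kk^2 * (1 - (s t)^2)))"
  define F2 where "F2 = (\<lambda>t. E1 t * (-2 * ((s1 t)^2 + s t * s2 t) + 4 * kk^2 * s t * s1 t + kk^4 * (1 - (s t)^2)))"
  define G where "G = (\<lambda>t. E2 t * (2 * s t - (s t)^2))"
  define G1 where "G1 = (\<lambda>t. E2 t * (2 * (1 - s t) * s1 t - kk'^2 * (2 * s t - (s t)^2)))"
  define G2 where "G2 = (\<lambda>t. E2 t * (2 * (1 - s t) * s2 t - 2 * (s1 t)^2 - 4 * kk'^2 * (1 - s t) * s1 t + kk'^4 * (2 * s t - (s t)^2)))"
  have taud: "(tau has_real_derivative kk) (at t)" for t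
    unfolding tau_def by (auto intro!: derivative_eq_intros)
  have sd: "(s has_real_derivative s1 t) (at t)" for t
    unfolding s_def s1_def using DERIV_chain2[OF sig_deriv taud] by (simp add: mult.commute)
  have s1d: "(s1 has_real_derivative s2 t) (at t)" for t
    unfolding s1_def s2_def using DERIV_cmult[OF DERIV_chain2[OF sig1_deriv taud], of kk]
    by (simp add: power2_eq_square ac_simps)
  have E1d: "(E1 has_real_derivative (- kk\<^sup>2) * E1 t) (at t)" for t
    unfolding E1_def by (auto intro!: derivative_eq_intros)
  have E2d: "(E2 has_real_derivative (- kk'\<^sup>2) * E2 t) (at t)" for t
    unfolding E2_def by (auto intro!: derivative_eq_intros)
  have Fd: "(F has_real_derivative F1 t) (at t)" for t
    unfolding F_def[abs_def]
    by (rule derivative_eq_intros E1d sd refl)+ (simp add: F1_def algebra_simps)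
  have F1d: "(F1 has_real_derivative F2 t) (at t)" for t
    unfolding F1_def[abs_def]
    by (rule derivative_eq_intros E1d sd s1d refl)+ (simp add: F2_def algebra_simps power2_eq_square power4_eq_xxxx)
  have Gd: "(G has_real_derivative G1 t) (at t)" for t
    unfolding G_def[abs_def]
    by (rule derivative_eq_intros E2d sd refl)+ (simp add: G1_def algebra_simps)
  have G1d: "(G1 has_real_derivative G2 t) (at t)" for t
    unfolding G1_def[abs_def]
    by (rule derivative_eq_intros E2d sd s1d refl)+ (simp add: G2_def algebra_simps power2_eq_square power4_eq_xxxx)
  have cs: "isCont s t" "isCont s1 t" "isCont E1 t" "isCont E2 t" for t
    using sd s1d E1d E2d DERIV_isCont by blast+
  have ctau: "isCont tau t" for t using taud DERIV_isCont by blast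
  have cs2: "isCont s2 t" for t
    unfolding s2_def by (intro continuous_intros isCont_o2[OF ctau sig2_cont])
  have cF2: "isCont F2 t" "isCont G2 t" for t
    unfolding F2_def G2_def by (intro continuous_intros cs cs2)+
  have srng: "0 \<le> s t" "s t \<le> 1" for t using sig_range by (auto simp: s_def)
  have s1b: "\<bar>s1 t\<bar> \<le> kk * D1" for t
    using hD1 kk by (auto simp: s1_def abs_mult intro!: mult_left_mono)
  have s2b: "\<bar>s2 t\<bar> \<le> kk^2 * D2" for t
    using hD2 kk by (auto simp: s2_def abs_mult intro!: mult_left_mono)
  have E1p: "E1 t > 0" and E2p: "E2 t > 0" for t using hc1 hc2 by (auto simp: E1_def E2_def)
  have ratio: "E2 t = E1 t * exp ((kk^2 - kk'^2) * (t - t1))" for t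
  proof -
    have "E2 t = c2 * exp (- kk'\<^sup>2 * t1) * exp (- kk'\<^sup>2 * (t - t1))"
      unfolding E2_def by (simp add: mult.assoc exp_add[symmetric] algebra_simps)
    also have "\<dots> = c1 * exp (- kk\<^sup>2 * t1) * exp (- kk'\<^sup>2 * (t - t1))" using hc' by simp
    also have "\<dots> = E1 t * exp ((kk^2 - kk'^2) * (t - t1))"
      unfolding E1_def by (simp add: mult.assoc exp_add[symmetric] algebra_simps)
    finally show ?thesis .
  qed
  define f where "f = (\<lambda>t. complex_of_real (F t))"
  define f1 where "f1 = (\<lambda>t. complex_of_real (F1 t))"
  define f2 where "f2 = (\<lambda>t. complex_of_real (F2 t))"
  define g where "g = (\<lambda>t. complex_of_real (G t))"
  define g1 where "g1 = (\<lambda>t. complex_of_real (G1 t))"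
  define g2 where "g2 = (\<lambda>t. complex_of_real (G2 t))"
  have fd: "(f has_vector_derivative f1 t) (at t)" "(f1 has_vector_derivative f2 t) (at t)"
     "(g has_vector_derivative g1 t) (at t)" "(g1 has_vector_derivative g2 t) (at t)" for t
    unfolding f_def f1_def f2_def g_def g1_def g2_def
    by (rule has_vector_derivative_of_real Fd F1d Gd G1d)+
  have cf2: "isCont f2 t" "isCont g2 t" for t
    unfolding f2_def g2_def by (intro continuous_intros cF2)+
  define Hh where "Hh = (\<lambda>t. 2 * s1 t * E1 t / (kk' * E2 t * (2 - s t)))"
  define Aa where "Aa = (\<lambda>t. -2 * s1 t * E2 t / (kk * E1 t * (1 + s t)))"
  define a where "a = (\<lambda>t. \<i> * complex_of_real (Aa t))"
  define h where "h = (\<lambda>t. \<i> * complex_of_real (Hh t))"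
  define B where "B = (\<lambda>p::pt. (a (snd (snd p)) * exp (\<i> * complex_of_real (kk' * fst (snd p) - kk * fst p)),
                               h (snd (snd p)) * exp (\<i> * complex_of_real (kk * fst p - kk' * fst (snd p)))))"
  define u where "u \<equiv> \<lambda>p::pt. f (snd (snd p)) * ek kk (fst p) + g (snd (snd p)) * ek kk' (fst (snd p))"
  define U where "U \<equiv> \<lambda>p::pt. (f (snd (snd p)) * (\<i> * of_real kk * ek kk (fst p)),
                    g (snd (snd p)) * (\<i> * of_real kk' * ek kk' (fst (snd p))),
                    f1 (snd (snd p)) * ek kk (fst p) + g1 (snd (snd p)) * ek kk' (fst (snd p)))"
  define X where "X \<equiv> \<lambda>p::pt. (f (snd (snd p)) * (\<i> * of_real kk * (\<i> * of_real kk * ek kk (fst p))), 0::complex,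
                    f1 (snd (snd p)) * (\<i> * of_real kk * ek kk (fst p)))"
  define Y where "Y \<equiv> \<lambda>p::pt. (0::complex, g (snd (snd p)) * (\<i> * of_real kk' * (\<i> * of_real kk' * ek kk' (fst (snd p)))),
                    g1 (snd (snd p)) * (\<i> * of_real kk' * ek kk' (fst (snd p))))"
  define Z where "Z \<equiv> \<lambda>p::pt. (f1 (snd (snd p)) * (\<i> * of_real kk * ek kk (fst p)),
                    g1 (snd (snd p)) * (\<i> * of_real kk' * ek kk' (fst (snd p))),
                    f2 (snd (snd p)) * ek kk (fst p) + g2 (snd (snd p)) * ek kk' (fst (snd p)))"
  have C2: "C2_on_with S u (\<lambda>p. L3 (U p)) (\<lambda>p. Lc (X p, Y p, Z p))" for S
    unfolding u_def U_def X_def Y_def Z_def by (rule gen_C2[OF fd cf2])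
  have nz: "E2 t \<noteq> 0" "kk' \<noteq> 0" "2 - s t \<noteq> 0" "E1 t \<noteq> 0" "kk \<noteq> 0" "1 + s t \<noteq> 0" for t
    using E1p[of t] E2p[of t] kk srng[of t] by auto
  have nzt: "E2 t \<noteq> 0" "2 - s t \<noteq> 0" "E1 t \<noteq> 0" "1 + s t \<noteq> 0" for t
    using nz by auto
  have idf: "f1 t = - (complex_of_real kk ^ 2) * f t + h t * (\<i> * complex_of_real kk') * g t" for t
    unfolding f1_def f_def h_def g_def F1_def F_def Hh_def G_def
    by (rule lift1[OF algF[OF nz(1,2,3)]])
  have idg: "g1 t = - (complex_of_real kk' ^ 2) * g t + a t * (\<i> * complex_of_real kk) * f t" for t
    unfolding g1_def f_def a_def g_def G1_def F_def Aa_def G_def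
    by (rule lift1[OF algG[OF nz(4,5,6)]])
  have pde: "blinfun_apply (L3 (U p)) dir_t = blinfun_apply (blinfun_apply (Lc (X p, Y p, Z p)) dir_x) dir_x
       + blinfun_apply (blinfun_apply (Lc (X p, Y p, Z p)) dir_y) dir_y
       + fst (B p) * blinfun_apply (L3 (U p)) dir_x + snd (B p) * blinfun_apply (L3 (U p)) dir_y" for p
  proof -
    obtain x y t where p: "p = (x, y, t)" by (cases p) auto
    show ?thesis unfolding L3_dirs Lc_dirs p
      unfolding U_def X_def Y_def Z_def B_def fst_conv snd_conv
      by (rule pde_alg[OF idf idg]) (simp_all only: ek_def ekmix)
  qed
  let ?I = "{t1 .. t1 + 7 / (2 * kk)}"
  let ?S = "(UNIV :: real set) \<times> (UNIV :: real set) \<times> ?I"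
  have Pper_u: "torus_periodic u"
    unfolding torus_periodic_def u_def by (simp add: kk_def kk'_def ek_per)
  have Pper_B: "torus_periodic B"
    unfolding torus_periodic_def B_def kk_def kk'_def fst_conv snd_conv mix_per mix_per2 by simp
  have nzp: "kk * E1 t * (1 + s t) \<noteq> 0" "kk' * E2 t * (2 - s t) \<noteq> 0" for t
    using nzt[of t] nz(2,5) by auto
  have ca: "isCont a t" "isCont h t" for t
    unfolding a_def h_def Aa_def Hh_def by (intro continuous_intros cs nzp)+
  have PcontB: "continuous_on ?S B"
  proof (rule continuous_at_imp_continuous_on, rule ballI)
    fix p :: pt
    show "isCont B p" unfolding B_def
      by (intro continuous_intros ic_t ca)
  qed
  have expo: "(kk'^2 - kk^2) * (t - t1) \<le> 420" "(kk^2 - kk'^2) * (t - t1) \<le> 0" if "t \<in> ?I" for t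
  proof -
    have t0: "0 \<le> t - t1" "t - t1 \<le> 7 / (2 * kk)" using that by auto
    have d0: "0 \<le> kk'^2 - kk^2" using kk by (simp add: power_mono)
    have "kk'^2 - kk^2 = (kk' - kk) * (kk' + kk)" by (simp add: algebra_simps power2_eq_square)
    also have "\<dots> \<le> 10 * (12 * kk)" using kk by (intro mult_mono) auto
    finally have d1: "kk'^2 - kk^2 \<le> 120 * kk" by simp
    have "(kk'^2 - kk^2) * (t - t1) \<le> (120 * kk) * (7 / (2 * kk))"
      using d0 d1 t0 kk by (intro mult_mono) auto
    also have "\<dots> = 420" using kk by (simp add: field_simps)
    finally show "(kk'^2 - kk^2) * (t - t1) \<le> 420" .
    show "(kk^2 - kk'^2) * (t - t1) \<le> 0" using d0 t0 by (intro mult_nonpos_nonneg) auto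
  qed
  have PboundB: "norm (B p) \<le> B0" if "p \<in> ?S" for p
  proof -
    obtain x y t where p: "p = (x, y, t)" by (cases p) auto
    have tI: "t \<in> ?I" using that p by auto
    have r1: "E2 t / E1 t \<le> 1" "E1 t / E2 t \<le> exp 420"
    proof -
      have "E2 t / E1 t = exp ((kk^2 - kk'^2) * (t - t1))" using ratio[of t] nzt[of t] nz(2,5) by simp
      then show "E2 t / E1 t \<le> 1" using expo(2)[OF tI] by simp
      have "E1 t / E2 t = exp (- ((kk^2 - kk'^2) * (t - t1)))"
        unfolding exp_minus ratio[of t] using nzt[of t] by (simp add: inverse_eq_divide)
      also have "- ((kk^2 - kk'^2) * (t - t1)) = (kk'^2 - kk^2) * (t - t1)" by (simp add: algebra_simps)
      finally have "E1 t / E2 t = exp ((kk'^2 - kk^2) * (t - t1))" .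
      then show "E1 t / E2 t \<le> exp 420" using expo(1)[OF tI] by simp
    qed
    have q0: "0 \<le> E2 t / E1 t" "0 \<le> E1 t / E2 t" using E1p[of t] E2p[of t] by auto
    have Aeq: "Aa t = (-2 * s1 t / (kk * (1 + s t))) * (E2 t / E1 t)"
      unfolding Aa_def using nzt[of t] nz(2,5) by (simp add: field_simps)
    have Heq: "Hh t = (2 * s1 t / (kk' * (2 - s t))) * (E1 t / E2 t)"
      unfolding Hh_def using nzt[of t] nz(2,5) by (simp add: field_simps)
    have b1: "\<bar>-2 * s1 t / (kk * (1 + s t))\<bar> \<le> \<bar>-2\<bar> * D1"
      by (rule fracb[OF s1b]) (use kk srng[of t] in auto)
    have b2: "\<bar>2 * s1 t / (kk' * (2 - s t))\<bar> \<le> \<bar>2\<bar> * D1"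
      by (rule fracb[OF s1b]) (use kk srng[of t] in auto)
    have A: "\<bar>Aa t\<bar> \<le> 2 * D1"
      unfolding Aeq using abs_mult_le[OF b1, of "E2 t / E1 t" 1] r1 q0 by simp
    have H: "\<bar>Hh t\<bar> \<le> 2 * D1 * exp 420"
      unfolding Heq using abs_mult_le[OF b2, of "E1 t / E2 t" "exp 420"] r1 q0 by simp
    have "norm (B p) \<le> norm (fst (B p)) + norm (snd (B p))"
      using norm_Pair_le[of "fst (B p)" "snd (B p)"] by simp
    also have "norm (fst (B p)) = \<bar>Aa t\<bar>" by (simp add: B_def p a_def norm_mult)
    also have "norm (snd (B p)) = \<bar>Hh t\<bar>" by (simp add: B_def p h_def norm_mult)
    finally show ?thesis using A H hB0 by simp
  qed
  have Pearly: "\<forall>x y t. t \<in> {t1 .. t1 + 1 / (2 * kk)} \<longrightarrow>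
      u (x, y, t) = of_real c1 * (\<lambda>(x::real, y::real, t::real). exp (\<i> * of_real (kk * x)) * of_real (exp (- kk\<^sup>2 * t))) (x, y, t)
      \<and> B (x, y, t) = 0"
  proof (intro allI impI)
    fix x y t assume t: "t \<in> {t1 .. t1 + 1 / (2 * kk)}"
    have "kk * (t - t1) \<le> kk * (1 / (2 * kk))" using t kk by (intro mult_left_mono) auto
    also have "\<dots> = 1/2" using kk by simp
    finally have "tau t \<le> 0" by (simp add: tau_def)
    then have z: "s t = 0" "s1 t = 0" using sig_low by (auto simp: s_def s1_def)
    show "u (x, y, t) = of_real c1 * (\<lambda>(x::real, y::real, t::real). exp (\<i> * of_real (kk * x)) * of_real (exp (- kk\<^sup>2 * t))) (x, y, t)
      \<and> B (x, y, t) = 0"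
      by (simp add: u_def f_def g_def F_def G_def E1_def ek_def z B_def a_def h_def Aa_def Hh_def zero_prod_def)
  qed
  have Plate: "\<forall>x y t. t \<in> {t1 + 3 / kk .. t1 + 7 / (2 * kk)} \<longrightarrow>
      u (x, y, t) = of_real c2 * (\<lambda>(x::real, y::real, t::real). exp (\<i> * of_real (kk' * y)) * of_real (exp (- kk'\<^sup>2 * t))) (x, y, t)
      \<and> B (x, y, t) = 0"
  proof (intro allI impI)
    fix x y t assume t: "t \<in> {t1 + 3 / kk .. t1 + 7 / (2 * kk)}"
    have "3 = kk * (3 / kk)" using kk by simp
    also have "\<dots> \<le> kk * (t - t1)" using t kk by (intro mult_left_mono) auto
    finally have "tau t \<ge> 1" by (simp add: tau_def)
    then have z: "s t = 1" "s1 t = 0" using sig_high by (auto simp: s_def s1_def)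
    show "u (x, y, t) = of_real c2 * (\<lambda>(x::real, y::real, t::real). exp (\<i> * of_real (kk' * y)) * of_real (exp (- kk'\<^sup>2 * t))) (x, y, t)
      \<and> B (x, y, t) = 0"
      by (simp add: u_def f_def g_def F_def G_def E2_def ek_def z B_def a_def h_def Aa_def Hh_def zero_prod_def)
  qed
  have PC2: "C2_real_with ?I f f1 f2" "C2_real_with ?I g g1 g2"
    unfolding C2_real_with_def
    using fd cf2 by (auto intro: has_vector_derivative_at_within continuous_at_imp_continuous_on)
  have Pform: "\<forall>x y t. t \<in> ?I \<longrightarrow>
              u (x, y, t) = f t * exp (\<i> * of_real (kk * x)) + g t * exp (\<i> * of_real (kk' * y))"
    by (simp add: u_def ek_def)
  have M1: "1 \<le> M" "2 * D1 + 1 \<le> M" "2 * D1^2 + 2 * D2 + 4 * D1 + 1 \<le> M"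
    using hM D1p D2p by auto
  have Pbounds: "\<forall>t\<in>?I.
              norm (f t) \<le> M * c1 * exp (- kk\<^sup>2 * t) \<and>
              norm (f1 t) \<le> M * c1 * kk^2 * exp (- kk\<^sup>2 * t) \<and>
              norm (f2 t) \<le> M * c1 * kk^4 * exp (- kk\<^sup>2 * t) \<and>
              norm (g t) \<le> M * c2 * exp (- kk'\<^sup>2 * t) \<and>
              norm (g1 t) \<le> M * c2 * kk'^2 * exp (- kk'\<^sup>2 * t) \<and>
              norm (g2 t) \<le> M * c2 * kk'^4 * exp (- kk'\<^sup>2 * t)"
  proof
    fix t
    have S: "\<bar>1 - (s t)^2\<bar> \<le> 1" "\<bar>2 * s t - (s t)^2\<bar> \<le> 1" using s2_le[OF srng[of t]] by blast+
    have b1: "\<bar>-2 * s t * s1 t - kk^2 * (1 - (s t)^2)\<bar> \<le> kk^2 * (2 * D1 + 1)"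
         "\<bar>2 * (1 - s t) * s1 t - kk'^2 * (2 * s t - (s t)^2)\<bar> \<le> kk'^2 * (2 * D1 + 1)"
      by (rule bfg1[OF srng[of t] s1b[of t] kk(1) kk(2) D1p])+
    have b2: "\<bar>-2 * ((s1 t)^2 + s t * s2 t) + 4 * kk^2 * s t * s1 t + kk^4 * (1 - (s t)^2)\<bar> \<le> kk^4 * (2 * D1^2 + 2 * D2 + 4 * D1 + 1)"
         "\<bar>2 * (1 - s t) * s2 t - 2 * (s1 t)^2 - 4 * kk'^2 * (1 - s t) * s1 t + kk'^4 * (2 * s t - (s t)^2)\<bar> \<le> kk'^4 * (2 * D1^2 + 2 * D2 + 4 * D1 + 1)"
      by (rule bfg2[OF srng[of t] s1b[of t] s2b[of t] kk(1) kk(2) D1p D2p])+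
    have e: "E1 t = c1 * exp (- kk\<^sup>2 * t)" "E2 t = c2 * exp (- kk'\<^sup>2 * t)" by (simp_all add: E1_def E2_def)
    have "norm (f t) \<le> M * c1 * exp (- kk\<^sup>2 * t)"
      unfolding f_def F_def by (rule fin_bound0[OF E1p S(1) M1(1) e(1)])
    moreover have "norm (g t) \<le> M * c2 * exp (- kk'\<^sup>2 * t)"
      unfolding g_def G_def by (rule fin_bound0[OF E2p S(2) M1(1) e(2)])
    moreover have "norm (f1 t) \<le> M * c1 * kk^2 * exp (- kk\<^sup>2 * t)"
      unfolding f1_def F1_def by (rule fin_bound[OF E1p b1(1) M1(2) _ e(1)]) simp
    moreover have "norm (g1 t) \<le> M * c2 * kk'^2 * exp (- kk'\<^sup>2 * t)"
      unfolding g1_def G1_def by (rule fin_bound[OF E2p b1(2) M1(2) _ e(2)]) simp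
    moreover have "norm (f2 t) \<le> M * c1 * kk^4 * exp (- kk\<^sup>2 * t)"
      unfolding f2_def F2_def by (rule fin_bound[OF E1p b2(1) M1(3) _ e(1)]) simp
    moreover have "norm (g2 t) \<le> M * c2 * kk'^4 * exp (- kk'\<^sup>2 * t)"
      unfolding g2_def G2_def by (rule fin_bound[OF E2p b2(2) M1(3) _ e(2)]) simp
    ultimately show "norm (f t) \<le> M * c1 * exp (- kk\<^sup>2 * t) \<and>
              norm (f1 t) \<le> M * c1 * kk^2 * exp (- kk\<^sup>2 * t) \<and>
              norm (f2 t) \<le> M * c1 * kk^4 * exp (- kk\<^sup>2 * t) \<and>
              norm (g t) \<le> M * c2 * exp (- kk'\<^sup>2 * t) \<and>
              norm (g1 t) \<le> M * c2 * kk'^2 * exp (- kk'\<^sup>2 * t) \<and>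
              norm (g2 t) \<le> M * c2 * kk'^4 * exp (- kk'\<^sup>2 * t)" by blast
  qed
  show ?thesis
    unfolding Let_def kk_def[symmetric] kk'_def[symmetric]
    apply (rule exI[of _ u], rule exI[of _ "\<lambda>p. L3 (U p)"], rule exI[of _ "\<lambda>p. Lc (X p, Y p, Z p)"], rule exI[of _ B])
    apply (rule exI[of _ f], rule exI[of _ f1], rule exI[of _ f2], rule exI[of _ g], rule exI[of _ g1], rule exI[of _ g2])
    apply (intro conjI)
               apply (rule Pper_u)
              apply (rule Pper_B)
             apply (rule C2)
            apply (rule PcontB)
           apply (intro ballI, erule PboundB)
          apply (intro ballI, rule pde)
         apply (rule Pearly)
        apply (rule Plate)
       apply (rule PC2(1))
      apply (rule PC2(2))
     apply (rule Pform)
    apply (rule Pbounds)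
    done
qed


theorem mainTheorem17:
  shows "\<exists>B0 M :: real. \<forall>(k::int) (k'::int) (c1::real) (t1::real).
    1 \<le> k \<and> k \<le> k' \<and> k' \<le> k + 10 \<and> c1 > 0 \<and> t1 \<ge> 0 \<longrightarrow>
    (\<forall>c2::real. c2 > 0 \<and> c1 * exp (- (real_of_int k)\<^sup>2 * t1) = c2 * exp (- (real_of_int k')\<^sup>2 * t1) \<longrightarrow>
    (\<exists>(u :: pt \<Rightarrow> complex) Du D2u (B :: pt \<Rightarrow> complex \<times> complex)
        (f :: real \<Rightarrow> complex) f1 f2 (g :: real \<Rightarrow> complex) g1 g2.
      let I = {t1 .. t1 + 7 / (2 * real_of_int k)};
          S = (UNIV :: real set) \<times> (UNIV :: real set) \<times> I;
          u1 = (\<lambda>(x::real, y::real, t::real). exp (\<i> * of_real (real_of_int k * x)) * of_real (exp (- (real_of_int k)\<^sup>2 * t)));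
          u2 = (\<lambda>(x::real, y::real, t::real). exp (\<i> * of_real (real_of_int k' * y)) * of_real (exp (- (real_of_int k')\<^sup>2 * t)))
      in torus_periodic u \<and> torus_periodic B \<and>
         C2_on_with S u Du D2u \<and>
         continuous_on S B \<and>
         (\<forall>p\<in>S. norm (B p) \<le> B0) \<and>
         (\<forall>p\<in>S. Du p dir_t = D2u p dir_x dir_x + D2u p dir_y dir_y
                               + fst (B p) * Du p dir_x + snd (B p) * Du p dir_y) \<and>
         (\<forall>x y t. t \<in> {t1 .. t1 + 1 / (2 * real_of_int k)} \<longrightarrow>
              u (x, y, t) = of_real c1 * u1 (x, y, t) \<and> B (x, y, t) = 0) \<and>
         (\<forall>x y t. t \<in> {t1 + 3 / real_of_int k .. t1 + 7 / (2 * real_of_int k)} \<longrightarrow>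
              u (x, y, t) = of_real c2 * u2 (x, y, t) \<and> B (x, y, t) = 0) \<and>
         C2_real_with I f f1 f2 \<and> C2_real_with I g g1 g2 \<and>
         (\<forall>x y t. t \<in> I \<longrightarrow>
              u (x, y, t) = f t * exp (\<i> * of_real (real_of_int k * x))
                          + g t * exp (\<i> * of_real (real_of_int k' * y))) \<and>
         (\<forall>t\<in>I.
              norm (f t) \<le> M * c1 * exp (- (real_of_int k)\<^sup>2 * t) \<and>
              norm (f1 t) \<le> M * c1 * (real_of_int k)^2 * exp (- (real_of_int k)\<^sup>2 * t) \<and>
              norm (f2 t) \<le> M * c1 * (real_of_int k)^4 * exp (- (real_of_int k)\<^sup>2 * t) \<and>
              norm (g t) \<le> M * c2 * exp (- (real_of_int k')\<^sup>2 * t) \<and>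
              norm (g1 t) \<le> M * c2 * (real_of_int k')^2 * exp (- (real_of_int k')\<^sup>2 * t) \<and>
              norm (g2 t) \<le> M * c2 * (real_of_int k')^4 * exp (- (real_of_int k')\<^sup>2 * t))))"
proof -
  obtain D1 where D1: "D1 \<ge> 0" "\<forall>x. \<bar>sig1 x\<bar> \<le> D1" using sig1_bound by blast
  obtain D2 where D2: "D2 \<ge> 0" "\<forall>x. \<bar>sig2 x\<bar> \<le> D2" using sig2_bound by blast
  show ?thesis
    apply (rule exI[of _ "2 * D1 + 2 * D1 * exp 420"], rule exI[of _ "1 + 4 * D1 + 2 * D1^2 + 2 * D2"])
    apply (intro allI impI)
    apply (elim conjE)
    apply (rule construction)
    using D1 D2 by auto
qed

end
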